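(* Let $\sigma=(M_1,M_2)$ be a schedule of $n$ jobs on two identical machines and let $k\ge 1$. Running the randomized $k$-swap algorithm (described in the context) $O(\sqrt{k})$ times independently for each of the parameter values $\tilde k\in\{1,2,\dots,k\}$ (i.e. with $\tilde k$ in place of $k$) takes $O(k^{3/2}\cdot n^{\lceil k/2\rceil}\cdot \log n)$ steps in total, and, if $\sigma$ has an improving neighbor in the $k$-swap neighborhood, this procedure finds an improving solution in the $k$-swap neighborhood with probability of success at least $1-\frac1e$.
   Context: Problem $P2\|C_{\max}$: we are given $n$ jobs with processing times $p_j>0$ and two identical machines. A schedule $\sigma=(M_1,M_2)$ is a partition of the jobs into the sets $M_1,M_2$ of jobs processed on machine 1 and machine 2. The load of machine $i$ is $L_i=\sum_{j\in M_i}p_j$; the makespan is $L_{\max}=\max_i L_i$, $L_{\min}=\min_i L_i$, and $\Delta=L_{\max}-L_{\min}$. A machine with load $L_{\max}$ is critical; one with load $L_{\min}$ is the min-load machine. A $k$-swap neighbor of $\sigma$ is obtained by selecting $k'$ jobs on one machine and $k''$ jobs on the other machine with $k'+k''\le k$ and interchanging the machine assignments of these jobs. A neighbor is improving (a better solution) if its makespan is strictly smaller than that of $\sigma$; equivalently, there are a set $S'$ of jobs on the critical machine and a set $S''$ of jobs on the min-load machine with $|S'|+|S''|\le k$ and $0<\sum_{j\in S'}p_j-\sum_{j\in S''}p_j<\Delta$, which are interchanged. Randomized $k$-swap algorithm (input: $\sigma$ and $k$; label the machines so that machine 1 is critical): (1) assign each job independently and uniformly at random to one of two sets $A$ or $B$;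 (2) for every $S_1\subseteq A$ with $|S_1|=\lceil k/2\rceil$ put the value $\sum_{j\in S_1\cap M_1}p_j-\sum_{j\in S_1\cap M_2}p_j$ (with a reference to $S_1$) into $A_\Sigma$; (3) for every $S_2\subseteq B$ with $|S_2|=\lfloor k/2\rfloor$ put $\sum_{j\in S_2\cap M_1}p_j-\sum_{j\in S_2\cap M_2}p_j$ (with a reference to $S_2$) into $B_\Sigma$; (4) sort $B_\Sigma$ in non-decreasing order; (5) for each $x\in A_\Sigma$, search (by binary search) for a $y\in B_\Sigma$ with $-x<y<\Delta-x$; if found, update $\sigma$ by interchanging the machine assignments of all jobs in the corresponding $S_1\cup S_2$ and return True; (6) otherwise return False. Whenever the algorithm returns True, the updated schedule has strictly smaller makespan. *)

theory Defs
  imports "HOL-Probability.Probability"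
begin

(* Jobs are 0..<n with processing times p. A schedule is given by the set M1 of
   jobs on machine 1; machine 2 gets the remaining jobs {..<n} - M1. *)

definition load2 :: "nat \<Rightarrow> (nat \<Rightarrow> real) \<Rightarrow> nat set \<Rightarrow> real" where
  "load2 n p M1 = sum p ({..<n} - M1)"

definition makespan :: "nat \<Rightarrow> (nat \<Rightarrow> real) \<Rightarrow> nat set \<Rightarrow> real" where
  "makespan n p M1 = max (sum p M1) (load2 n p M1)"

definition Delta :: "nat \<Rightarrow> (nat \<Rightarrow> real) \<Rightarrow> nat set \<Rightarrow> real" where
  "Delta n p M1 = max (sum p M1) (load2 n p M1) - min (sum p M1) (load2 n p M1)"

definition swap_jobs :: "nat set \<Rightarrow> nat set \<Rightarrow> nat set" where
  "swap_jobs T M1 = (M1 - T) \<union> (T - M1)"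

definition kswap_neighbor :: "nat \<Rightarrow> nat \<Rightarrow> nat set \<Rightarrow> nat set \<Rightarrow> bool" where
  "kswap_neighbor n k M1 M1' \<longleftrightarrow>
     (\<exists>T'' T'. T' \<subseteq> M1 \<and> T'' \<subseteq> {..<n} - M1 \<and> card T' + card T'' \<le> k
             \<and> M1' = swap_jobs (T' \<union> T'') M1)"

(* the critical machine (labelled "machine 1" by the algorithm) and the other one *)
definition crit :: "nat \<Rightarrow> (nat \<Rightarrow> real) \<Rightarrow> nat set \<Rightarrow> nat set" where
  "crit n p M1 = (if sum p M1 \<ge> load2 n p M1 then M1 else {..<n} - M1)"

definition noncrit :: "nat \<Rightarrow> (nat \<Rightarrow> real) \<Rightarrow> nat set \<Rightarrow> nat set" where
  "noncrit n p M1 = {..<n} - crit n p M1"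

(* value put into A_Sigma / B_Sigma for a set S of jobs *)
definition sval :: "nat \<Rightarrow> (nat \<Rightarrow> real) \<Rightarrow> nat set \<Rightarrow> nat set \<Rightarrow> real" where
  "sval n p M1 S = sum p (S \<inter> crit n p M1) - sum p (S \<inter> noncrit n p M1)"

(* A pair (S1,S2) that step (5) of the randomized kt-swap algorithm can find, for the
   random partition a (job j is in A iff a j, in B otherwise). *)
definition found_pair ::
  "nat \<Rightarrow> (nat \<Rightarrow> real) \<Rightarrow> nat set \<Rightarrow> nat \<Rightarrow> (nat \<Rightarrow> bool) \<Rightarrow> nat set \<Rightarrow> nat set \<Rightarrow> bool" where
  "found_pair n p M1 kt a S1 S2 \<longleftrightarrow>
     S1 \<subseteq> {j. j < n \<and> a j} \<and> card S1 = (kt + 1) div 2 \<and>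
     S2 \<subseteq> {j. j < n \<and> \<not> a j} \<and> card S2 = kt div 2 \<and>
     - sval n p M1 S1 < sval n p M1 S2 \<and> sval n p M1 S2 < Delta n p M1 - sval n p M1 S1"

definition kswap_returns_true ::
  "nat \<Rightarrow> (nat \<Rightarrow> real) \<Rightarrow> nat set \<Rightarrow> nat \<Rightarrow> (nat \<Rightarrow> bool) \<Rightarrow> bool" where
  "kswap_returns_true n p M1 kt a \<longleftrightarrow> (\<exists>S1 S2. found_pair n p M1 kt a S1 S2)"

(* Cost model (number of elementary steps) of one full run with parameter kt on partition a:
   step (1): n; step (2): |A_Sigma| sums of ceil(kt/2) terms; step (3): |B_Sigma| sums of
   floor(kt/2) terms; step (4): sorting, |B_Sigma| * log2(|B_Sigma|+1); step (5): one binary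
   search per element of A_Sigma, log2(|B_Sigma|+1) each; final update: kt. *)
definition run_cost :: "nat \<Rightarrow> nat \<Rightarrow> (nat \<Rightarrow> bool) \<Rightarrow> real" where
  "run_cost n kt a =
     (let cA = card {j. j < n \<and> a j} choose ((kt + 1) div 2);
          cB = card {j. j < n \<and> \<not> a j} choose (kt div 2)
      in real n + real cA * real ((kt + 1) div 2) + real cB * real (kt div 2)
         + real cB * log 2 (real cB + 1) + real cA * log 2 (real cB + 1) + real kt)"

(* Distribution of the random bits of the whole procedure: for every parameter kt in 1..k,
   run index i < r and job j < n an independent fair coin (True = job j goes to A). *)
definition proc_pmf :: "nat \<Rightarrow> nat \<Rightarrow> nat \<Rightarrow> (nat \<times> nat \<times> nat \<Rightarrow> bool) pmf" where
  "proc_pmf n k r = Pi_pmf ({1..k} \<times> {..<r} \<times> {..<n}) False (\<lambda>_. bernoulli_pmf (1/2))"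

end

theory Submission
  imports Defs
begin

declare binomial_Suc_Suc[simp del]


lemma sum_swap1:
  fixes p :: "nat \<Rightarrow> real"
  assumes "M1 \<subseteq> {..<n}" "T \<subseteq> {..<n}"
  shows "sum p (swap_jobs T M1) = sum p M1 - sum p (T \<inter> M1) + sum p (T - M1)"
proof -
  have f: "finite M1" "finite T" using assms finite_subset by auto
  have "sum p (swap_jobs T M1) = sum p (M1 - T) + sum p (T - M1)"
    unfolding swap_jobs_def using f by (intro sum.union_disjoint) auto
  moreover have "sum p M1 = sum p (M1 - T) + sum p (T \<inter> M1)"
    using sum.Int_Diff[OF f(1), of p T] by (simp add: Int_commute add.commute)
  ultimately show ?thesis by simp
qed

lemma sum_swap2:
  fixes p :: "nat \<Rightarrow> real"
  assumes "M1 \<subseteq> {..<n}" "T \<subseteq> {..<n}"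
  shows "load2 n p (swap_jobs T M1) = load2 n p M1 - sum p (T - M1) + sum p (T \<inter> M1)"
proof -
  have e: "{..<n} - swap_jobs T M1 = ({..<n} - M1 - T) \<union> (T \<inter> M1)"
    using assms unfolding swap_jobs_def by auto
  have "sum p ({..<n} - swap_jobs T M1) = sum p ({..<n} - M1 - T) + sum p (T \<inter> M1)"
    unfolding e using assms by (intro sum.union_disjoint) (auto intro: finite_subset)
  moreover have "sum p ({..<n} - M1) = sum p ({..<n} - M1 - T) + sum p (T - M1)"
  proof -
    have "T - M1 = ({..<n} - M1) \<inter> T" using assms by auto
    moreover have "sum p ({..<n} - M1) = sum p (({..<n} - M1) \<inter> T) + sum p ({..<n} - M1 - T)"
      by (rule sum.Int_Diff) simp
    ultimately show ?thesis by (simp add: add.commute)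
  qed
  ultimately show ?thesis unfolding load2_def by simp
qed

lemma sval_eq:
  assumes "M1 \<subseteq> {..<n}" "T \<subseteq> {..<n}"
  shows "sval n p M1 T = (if sum p M1 \<ge> load2 n p M1 then sum p (T \<inter> M1) - sum p (T - M1)
                          else sum p (T - M1) - sum p (T \<inter> M1))"
proof -
  have a: "T \<inter> ({..<n} - M1) = T - M1" using assms by auto
  have b: "{..<n} - ({..<n} - M1) = M1" using assms by auto
  show ?thesis unfolding sval_def noncrit_def crit_def using a b
    by (auto simp: Int_commute)
qed

lemma improve_iff:
  assumes "M1 \<subseteq> {..<n}" "T \<subseteq> {..<n}"
  shows "makespan n p (swap_jobs T M1) < makespan n p M1 \<longleftrightarrow>
         0 < sval n p M1 T \<and> sval n p M1 T < Delta n p M1"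
proof -
  define L1 where "L1 = sum p M1"
  define L2 where "L2 = load2 n p M1"
  define a where "a = sum p (T \<inter> M1)"
  define b where "b = sum p (T - M1)"
  have s1: "sum p (swap_jobs T M1) = L1 - a + b" using sum_swap1[OF assms, of p] L1_def a_def b_def by simp
  have s2: "load2 n p (swap_jobs T M1) = L2 - b + a" using sum_swap2[OF assms, of p] L2_def a_def b_def by simp
  have sv: "sval n p M1 T = (if L1 \<ge> L2 then a - b else b - a)" using sval_eq[OF assms, of p] L1_def L2_def a_def b_def by simp
  have m1: "makespan n p (swap_jobs T M1) = max (L1 - a + b) (L2 - b + a)" unfolding makespan_def using s1 s2 by simp
  have m2: "makespan n p M1 = max L1 L2" unfolding makespan_def L1_def L2_def by simp
  have d: "Delta n p M1 = max L1 L2 - min L1 L2" unfolding Delta_def L1_def L2_def by simp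
  show ?thesis
  proof (cases "L1 \<ge> L2")
    case True
    have e: "max L1 L2 = L1" "min L1 L2 = L2" using True by (simp_all add: max_def min_def)
    show ?thesis unfolding m1 m2 d sv e if_P[OF True] max_less_iff_conj by linarith
  next
    case False
    have e: "max L1 L2 = L2" "min L1 L2 = L1" using False by (simp_all add: max_def min_def)
    show ?thesis unfolding m1 m2 d sv e if_not_P[OF False] max_less_iff_conj by linarith
  qed
qed

lemma sval_union:
  assumes "S1 \<inter> S2 = {}" "finite S1" "finite S2"
  shows "sval n p M1 (S1 \<union> S2) = sval n p M1 S1 + sval n p M1 S2"
proof -
  have "sum p ((S1 \<union> S2) \<inter> C) = sum p (S1 \<inter> C) + sum p (S2 \<inter> C)" for C
  proof -
    have "(S1 \<union> S2) \<inter> C = (S1 \<inter> C) \<union> (S2 \<inter> C)" by auto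
    then show ?thesis using assms by (simp add: sum.union_disjoint disjoint_iff)
  qed
  then show ?thesis unfolding sval_def by simp
qed



lemma choose_le_pow_real:
  assumes "c \<le> n"
  shows "real (c choose m) \<le> real n ^ m"
proof (cases "m \<le> c")
  case True
  have "c choose m \<le> c ^ m" using binomial_le_pow[OF True] .
  also have "\<dots> \<le> n ^ m" using assms by (simp add: power_mono)
  finally show ?thesis by (metis of_nat_le_iff of_nat_power)
next
  case False then show ?thesis by (simp add: binomial_eq_0)
qed

lemma cost1:
  assumes n: "n \<ge> 2" and kt: "kt \<ge> 1"
  shows "run_cost n kt a \<le> 12 * real kt * real n ^ ((kt + 1) div 2) * ln (real n)"
proof -
  define c where "c = (kt + 1) div 2"
  define f where "f = kt div 2"
  define cA where "cA = card {j. j < n \<and> a j} choose c"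
  define cB where "cB = card {j. j < n \<and> \<not> a j} choose f"
  define P where "P = real n ^ c"
  define L where "L = ln (real n)"
  have c1: "c \<ge> 1" "c \<le> kt" "f \<le> c" "f + 1 \<le> kt" using kt unfolding c_def f_def by auto
  have L: "2 * L \<ge> 1"
  proof -
    have "ln (2::real) \<le> L" unfolding L_def using n by simp
    moreover have "ln (2::real) \<ge> 1/2"
    proof -
      have "ln (1/2::real) \<le> 1/2 - 1" by (rule ln_le_minus_one) simp
      then show ?thesis by (simp add: ln_div)
    qed
    ultimately show ?thesis by simp
  qed
  have n1: "real n \<ge> 1" using n by simp
  have P1: "P \<ge> real n" unfolding P_def using c1 n1
    by (metis power_increasing power_one_right)
  have Pge1: "P \<ge> 1" using P1 n1 by simp
  have cA: "real cA \<le> P" unfolding cA_def P_def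
    by (rule choose_le_pow_real) (auto intro: card_mono[of "{..<n}", simplified] )
  have cB: "real cB \<le> real n ^ f" unfolding cB_def
    by (rule choose_le_pow_real) (auto intro: card_mono[of "{..<n}", simplified] )
  have cBP: "real n ^ f \<le> P" unfolding P_def using c1 n1 by (simp add: power_increasing)
  have cBP': "real cB \<le> P" using cB cBP by linarith
  have lg: "log 2 (real cB + 1) \<le> 2 * real kt * L"
  proof -
    have "real cB + 1 \<le> real n ^ (f + 1)"
    proof -
      have "real n ^ f \<ge> 1" using n1 by simp
      moreover have "2 * real n ^ f \<le> real n * real n ^ f" using n by (intro mult_right_mono) auto
      ultimately have "real n ^ f + 1 \<le> real n * real n ^ f" by linarith
      moreover have "real n ^ (f + 1) = real n * real n ^ f" by simp
      ultimately show ?thesis using cB by linarith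
    qed
    then have "log 2 (real cB + 1) \<le> log 2 (real n ^ (f + 1))" by simp
    also have "\<dots> = real (f + 1) * log 2 (real n)" using n by (intro log_nat_power) simp
    also have "\<dots> \<le> real kt * log 2 (real n)"
      using c1 n by (intro mult_right_mono) auto
    also have "log 2 (real n) = L / ln 2" unfolding L_def log_def by simp
    also have "L / ln 2 \<le> 2 * L"
    proof -
      have "L \<ge> 0" unfolding L_def using n by simp
      moreover have "ln (2::real) \<ge> 1/2"
      proof -
        have "ln (1/2::real) \<le> 1/2 - 1" by (rule ln_le_minus_one) simp
        then show ?thesis by (simp add: ln_div)
      qed
      ultimately have a: "L \<ge> 0" "ln (2::real) \<ge> 1/2" by auto
      have l2p: "ln (2::real) > 0" by simp
      have "L * 1 \<le> L * (2 * ln 2)" using a by (intro mult_left_mono) auto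
      then have "L \<le> (2 * L) * ln 2" by (simp add: algebra_simps)
      then show ?thesis using l2p by (simp add: divide_le_eq)
    qed
    finally show ?thesis using kt by (simp add: mult_left_mono)
  qed
  have kP: "real kt * P * (2 * L) \<ge> real kt * P" using L Pge1 kt by simp
  have t1: "real n \<le> real kt * P * (2 * L)" using kP P1 kt
    by (smt (verit) mult_le_cancel_right1 of_nat_1 of_nat_mono mult.commute Pge1)
  have t2: "real cA * real c \<le> real kt * P * (2 * L)"
  proof -
    have "real cA * real c \<le> P * real kt" using cA c1 Pge1 by (intro mult_mono) auto
    then show ?thesis using kP by (simp add: mult.commute)
  qed
  have t3: "real cB * real f \<le> real kt * P * (2 * L)"
  proof -
    have "real cB * real f \<le> P * real kt" using cBP' c1 Pge1 by (intro mult_mono) auto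
    then show ?thesis using kP by (simp add: mult.commute)
  qed
  have lg0: "log 2 (real cB + 1) \<ge> 0" by simp
  have t4: "real cB * log 2 (real cB + 1) \<le> real kt * P * (2 * L)"
  proof -
    have "real cB * log 2 (real cB + 1) \<le> P * (2 * real kt * L)"
      using cBP' lg lg0 Pge1 by (intro mult_mono) auto
    then show ?thesis by (simp add: algebra_simps)
  qed
  have t5: "real cA * log 2 (real cB + 1) \<le> real kt * P * (2 * L)"
  proof -
    have "real cA * log 2 (real cB + 1) \<le> P * (2 * real kt * L)"
      using cA lg lg0 Pge1 by (intro mult_mono) auto
    then show ?thesis by (simp add: algebra_simps)
  qed
  have t6: "real kt \<le> real kt * P * (2 * L)" using kP Pge1 kt
    by (smt (verit) mult_le_cancel_left1 of_nat_0_le_iff)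
  have "run_cost n kt a = real n + real cA * real c + real cB * real f
         + real cB * log 2 (real cB + 1) + real cA * log 2 (real cB + 1) + real kt"
    unfolding run_cost_def Let_def cA_def cB_def c_def f_def by simp
  also have "\<dots> \<le> 6 * (real kt * P * (2 * L))" using t1 t2 t3 t4 t5 t6 by linarith
  also have "\<dots> = 12 * real kt * P * L" by simp
  finally show ?thesis unfolding P_def L_def c_def .
qed

lemma geom_sum:
  assumes n: "(n::real) \<ge> 2"
  shows "(\<Sum>kt\<in>{1..k}. n ^ ((kt + 1) div 2)) \<le> 4 * n ^ ((k + 1) div 2)"
proof -
  have main: "(\<Sum>kt\<in>{1..2*M}. n ^ ((kt + 1) div 2)) \<le> 4 * n ^ M - 4" for M
  proof (induction M)
    case 0 then show ?case by simp
  next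
    case (Suc M)
    have e: "{1..2 * Suc M} = {1..2*M} \<union> {2*M+1, 2*M+2}" by auto
    have "(\<Sum>kt\<in>{1..2 * Suc M}. n ^ ((kt + 1) div 2)) = (\<Sum>kt\<in>{1..2*M}. n ^ ((kt + 1) div 2)) + 2 * n ^ Suc M"
      unfolding e by (subst sum.union_disjoint) auto
    also have "\<dots> \<le> 4 * n ^ M - 4 + 2 * n ^ Suc M" using Suc by simp
    also have "\<dots> \<le> 4 * n ^ Suc M - 4"
    proof -
      have "2 * n ^ M \<le> n ^ Suc M" using n by (simp add: mult_right_mono)
      then show ?thesis by simp
    qed
    finally show ?case .
  qed
  have "(\<Sum>kt\<in>{1..k}. n ^ ((kt + 1) div 2)) \<le> (\<Sum>kt\<in>{1..2*((k+1) div 2)}. n ^ ((kt + 1) div 2))"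
    using n by (intro sum_mono2) auto
  also have "\<dots> \<le> 4 * n ^ ((k + 1) div 2) - 4" by (rule main)
  finally show ?thesis by simp
qed





lemma cbin_step: "(j + 1) * ((2*j+2) choose (j+1)) = 2 * (2*j+1) * ((2*j) choose j)"
proof -
  have a: "(j+1) * ((2*j+2) choose (j+1)) = (2*j+2) * ((2*j+1) choose j)"
    using Suc_times_binomial[of j "2*j+1"] by simp
  have s: "(2*j+1) choose j = (2*j+1) choose (j+1)"
    using binomial_symmetric[of j "2*j+1"] by simp
  have b: "(2*j+1) * ((2*j) choose j) = ((2*j+1) choose (j+1)) * (j+1)"
    using Suc_times_binomial_eq[of "2*j" j] by simp
  define X where "X = (2*j+2) choose (j+1)"
  define Y where "Y = (2*j+1) choose (j+1)"
  define Z where "Z = (2*j) choose j"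
  have a': "(j+1) * X = (2*j+2) * Y" using a s unfolding X_def Y_def by simp
  have b': "(2*j+1) * Z = Y * (j+1)" using b unfolding Y_def Z_def by simp
  have "(j+1) * ((j+1) * X) = (j+1) * ((2*j+2) * Y)" using a' by simp
  also have "\<dots> = 2 * (Y * (j+1)) * (j+1)" by (simp add: algebra_simps)
  also have "\<dots> = 2 * ((2*j+1) * Z) * (j+1)" using b' by simp
  also have "\<dots> = (j+1) * (2 * (2*j+1) * Z)" by (simp add: algebra_simps)
  finally have "(j+1) * ((j+1) * X) = (j+1) * (2 * (2*j+1) * Z)" .
  then have "(j+1) * X = 2 * (2*j+1) * Z" using mult_left_cancel[of "j+1"] by (simp only:)
  then show ?thesis unfolding X_def Z_def .
qed

lemma cbin_odd: "(2*j) choose j = 2 * ((2*j - 1) choose j)" if j1: "j \<ge> 1"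
proof -
  obtain i where i: "j = Suc i" using j1 by (cases j) auto
  have "(2*j) choose j = Suc (2*i+1) choose Suc i" using i by (simp del: binomial_Suc_Suc)
  also have "\<dots> = ((2*i+1) choose i) + ((2*i+1) choose (Suc i))" by (rule binomial_Suc_Suc)
  also have "(2*i+1) choose i = (2*i+1) choose (Suc i)"
    using binomial_symmetric[of i "2*i+1"] by (simp del: binomial_Suc_Suc)
  finally show ?thesis using i by (simp del: binomial_Suc_Suc)
qed

lemma cbin_lower: "j \<ge> 1 \<Longrightarrow> (real ((2*j) choose j) / 4^j)^2 * (4 * real j) \<ge> 1"
proof (induction j rule: nat_induct_at_least)
  case base
  then show ?case by (simp add: numeral_2_eq_2)
next
  case (Suc j)
  define u where "u = real ((2*j) choose j) / 4^j"
  have rel: "real ((2*Suc j) choose Suc j) / 4^(Suc j) = u * (2*j+1) / (2*j+2)"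
  proof -
    define c1 where "c1 = real ((2*j+2) choose (j+1))"
    define c0 where "c0 = real ((2*j) choose j)"
    have e1: "(2*Suc j) choose Suc j = (2*j+2) choose (j+1)" by (simp del: binomial_Suc_Suc)
    have "real (j+1) * c1 = 2 * (2*j+1) * c0"
      unfolding c1_def c0_def using cbin_step[of j] by (metis of_nat_mult of_nat_numeral of_nat_Suc of_nat_add of_nat_1 mult_2)
    then have c1e: "c1 = 2 * (2*j+1) * c0 / (j+1)"
      by (simp add: field_simps)
    have ud: "u = c0 / 4^j" unfolding u_def c0_def ..
    have p: "(4::real)^j > 0" "real j + 1 > 0" by auto
    have "2 * (2 * real j + 1) * c0 / (real j + 1) / 4 ^ Suc j = ((2 * real j + 1) * c0) / (2 * (real j + 1) * 4^j)"
      using p by (simp add: divide_simps) (simp add: algebra_simps)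
    also have "\<dots> = c0 / 4 ^ j * (2 * real j + 1) / (2 * real j + 2)"
      using p by (simp add: divide_simps)
    finally have key: "2 * (2 * real j + 1) * c0 / (real j + 1) / 4 ^ Suc j = c0 / 4 ^ j * (2 * real j + 1) / (2 * real j + 2)" .
    have "c1 / 4^(Suc j) = u * (2*j+1) / (2*j+2)" unfolding c1e ud using key by (simp add: algebra_simps)
    then show ?thesis unfolding c1_def by (simp only: e1)
  qed
  have IH: "u^2 * (4 * real j) \<ge> 1" using Suc u_def by simp
  have "(u * (2*j+1) / (2*j+2))^2 * (4 * real (Suc j)) = u^2 * (4 * real j) * ((2*j+1)^2 / (4 * real j * (j+1)))"
  proof -
    have jp: "real j > 0" using Suc.hyps by simp
    define a where "a = 2 * real j + 1"
    define b where "b = real j + 1"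
    have bp: "b > 0" unfolding b_def by simp
    have l: "(u * (2*j+1) / (2*j+2))^2 * (4 * real (Suc j)) = u^2 * a^2 / b"
    proof -
      have "(u * (2*j+1) / (2*j+2))^2 * (4 * real (Suc j)) = (u * a / (2 * b))^2 * (4 * b)"
        unfolding a_def b_def by (simp add: algebra_simps)
      also have "\<dots> = u^2 * a^2 / b" using bp by (simp add: power2_eq_square field_simps)
      finally show ?thesis .
    qed
    have r: "u^2 * (4 * real j) * ((2*j+1)^2 / (4 * real j * (j+1))) = u^2 * a^2 / b"
    proof -
      have "u^2 * (4 * real j) * ((2*j+1)^2 / (4 * real j * (j+1))) = u^2 * (4 * real j) * (a^2 / (4 * real j * b))"
        unfolding a_def b_def by (simp add: add.commute)
      also have "\<dots> = u^2 * a^2 / b" using bp jp by (simp add: field_simps)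
      finally show ?thesis .
    qed
    show ?thesis using l r by simp
  qed
  also have "\<dots> \<ge> 1"
  proof -
    have jp: "real j > 0" using Suc.hyps by simp
    have X: "(2*j+1)^2 / (4 * real j * (j+1)) \<ge> 1"
    proof -
      have den: "4 * real j * (real j+1) > 0" using jp by simp
      have "4 * real j * (real j+1) \<le> (2*real j+1)^2" by (simp add: power2_eq_square algebra_simps)
      then show ?thesis using le_divide_eq_1_pos[OF den] by (simp add: add.commute)
    qed
    have "1 * 1 \<le> (u^2 * (4 * real j)) * ((2*j+1)^2 / (4 * real j * (j+1)))"
      by (rule mult_mono) (use IH X in auto)
    then show ?thesis by simp
  qed
  finally have fin: "1 \<le> (u * (2*j+1) / (2*j+2))^2 * (4 * real (Suc j))" by simp
  show ?case unfolding rel by (rule fin)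
qed

lemma q_lower:
  assumes m: "m \<ge> 1"
  shows "real (m choose ((m+1) div 2)) / 2^m \<ge> 1 / (2 * sqrt m)"
proof -
  define j where "j = (m+1) div 2"
  have j1: "j \<ge> 1" "j \<le> m" using m unfolding j_def by auto
  have q: "real (m choose j) / 2^m = real ((2*j) choose j) / 4^j"
  proof (cases "even m")
    case True
    then have "m = 2*j" unfolding j_def by auto
    then show ?thesis by (simp add: power_mult)
  next
    case False
    then have mj: "m = 2*j - 1" unfolding j_def by presburger
    have e: "2*j = Suc m" using mj j1 by simp
    have "(4::real)^j = 2^(2*j)" by (simp add: power_mult)
    also have "\<dots> = 2 * 2^m" using e by simp
    finally have "(4::real)^j = 2 * 2^m" .
    then show ?thesis using cbin_odd[OF j1(1)] mj by simp
  qed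
  define u where "u = real ((2*j) choose j) / 4^j"
  have "u^2 * (4 * real j) \<ge> 1" using cbin_lower[OF j1(1)] u_def by simp
  then have "sqrt (u^2 * (4 * real j)) \<ge> 1" by simp
  moreover have "sqrt (u^2 * (4 * real j)) = u * (2 * sqrt j)"
    unfolding u_def by (simp add: real_sqrt_mult)
  ultimately have "u * (2 * sqrt j) \<ge> 1" by simp
  moreover have "sqrt j \<le> sqrt m" using j1 by simp
  moreover have "u \<ge> 0" unfolding u_def by simp
  ultimately have "u * (2 * sqrt m) \<ge> 1"
    by (smt (verit) mult_left_mono)
  then have "u \<ge> 1 / (2 * sqrt m)" using m by (simp add: field_simps)
  then show ?thesis using q u_def j_def by simp
qed





lemma finite_set_Pi_pmf_bool:
  assumes "finite A"
  shows "finite (set_pmf (Pi_pmf A (d::bool) p))"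
proof (rule finite_subset[OF set_Pi_pmf_subset[OF assms]])
  have "{f. \<forall>x. x \<notin> A \<longrightarrow> f x = d} = PiE_dflt A d (\<lambda>_. UNIV)"
    unfolding PiE_dflt_def by auto
  then show "finite {f. \<forall>x. x \<notin> A \<longrightarrow> f x = d}"
    using finite_PiE_dflt[OF assms, of "\<lambda>_. UNIV" d] by simp
qed

lemma prob_pair_times:
  assumes "finite (set_pmf M)" "finite (set_pmf N)"
  shows "measure_pmf.prob (pair_pmf M N) (A \<times> B) = measure_pmf.prob M A * measure_pmf.prob N B"
proof -
  have "measure_pmf.prob (pair_pmf M N) (A \<times> B) =
        measure_pmf.prob (pair_pmf M N) ((A \<times> B) \<inter> set_pmf (pair_pmf M N))"
    by (rule measure_Int_set_pmf[symmetric])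
  also have "(A \<times> B) \<inter> set_pmf (pair_pmf M N) = (A \<inter> set_pmf M) \<times> (B \<inter> set_pmf N)"
    by auto
  also have "measure_pmf.prob (pair_pmf M N) \<dots> =
      measure_pmf.prob M (A \<inter> set_pmf M) * measure_pmf.prob N (B \<inter> set_pmf N)"
    using assms by (intro measure_pmf_prob_product) (auto intro: countable_finite)
  also have "\<dots> = measure_pmf.prob M A * measure_pmf.prob N B"
    by (simp add: measure_Int_set_pmf)
  finally show ?thesis .
qed

lemma block_binomial:
  assumes "finite W" "Ar \<subseteq> W"
  shows "map_pmf (\<lambda>g. card {x\<in>Ar. g x}) (Pi_pmf W False (\<lambda>_. bernoulli_pmf (1/2)))
         = binomial_pmf (card Ar) (1/2)"
proof -
  have fA: "finite Ar" using assms finite_subset by auto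
  have "binomial_pmf (card Ar) (1/2) =
        map_pmf (\<lambda>f. card {x\<in>Ar. f x}) (Pi_pmf Ar False (\<lambda>_. bernoulli_pmf (1/2)))"
    using fA by (intro binomial_pmf_altdef') auto
  also have "Pi_pmf Ar False (\<lambda>_. bernoulli_pmf (1/2)) =
       map_pmf (\<lambda>f x. if x \<in> Ar then f x else False) (Pi_pmf W False (\<lambda>_. bernoulli_pmf (1/2)))"
    using assms by (intro Pi_pmf_subset) auto
  also have "map_pmf (\<lambda>f. card {x\<in>Ar. f x}) \<dots> =
       map_pmf (\<lambda>g. card {x\<in>Ar. g x}) (Pi_pmf W False (\<lambda>_. bernoulli_pmf (1/2)))"
  proof -
    have eq: "(\<lambda>f. card {x\<in>Ar. f x}) \<circ> (\<lambda>f x. if x \<in> Ar then f x else False) = (\<lambda>g. card {x\<in>Ar. g x})"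
    proof (rule ext)
      fix g :: "'a \<Rightarrow> bool"
      have "{x\<in>Ar. (if x \<in> Ar then g x else False)} = {x\<in>Ar. g x}" by auto
      then show "((\<lambda>f. card {x\<in>Ar. f x}) \<circ> (\<lambda>f x. if x \<in> Ar then f x else False)) g = card {x\<in>Ar. g x}"
        by simp
    qed
    show ?thesis by (simp only: pmf.map_comp eq)
  qed
  finally show ?thesis by simp
qed

lemma block_prob:
  assumes "finite W" "Ar \<subseteq> W"
  shows "measure_pmf.prob (Pi_pmf W False (\<lambda>_. bernoulli_pmf (1/2))) {g. card {x\<in>Ar. g x} \<noteq> h}
         = 1 - pmf (binomial_pmf (card Ar) (1/2)) h"
proof -
  have "measure_pmf.prob (Pi_pmf W False (\<lambda>_. bernoulli_pmf (1/2))) {g. card {x\<in>Ar. g x} \<noteq> h}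
      = measure_pmf.prob (map_pmf (\<lambda>g. card {x\<in>Ar. g x}) (Pi_pmf W False (\<lambda>_. bernoulli_pmf (1/2)))) (- {h})"
    by (simp add: vimage_def)
  also have "\<dots> = measure_pmf.prob (binomial_pmf (card Ar) (1/2)) (- {h})"
    using block_binomial[OF assms] by simp
  also have "\<dots> = 1 - measure_pmf.prob (binomial_pmf (card Ar) (1/2)) {h}"
    using measure_pmf.prob_compl[of "{h}" "binomial_pmf (card Ar) (1/2)"] by (simp add: Compl_eq_Diff_UNIV)
  also have "\<dots> = 1 - pmf (binomial_pmf (card Ar) (1/2)) h"
    by (simp only: measure_pmf_single)
  finally show ?thesis .
qed

lemma fail_prob:
  fixes kt0 k n r h :: nat and T :: "nat set"
  assumes kt0: "kt0 \<in> {1..k}" and T: "T \<subseteq> {..<n}"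
  shows "measure_pmf.prob (Pi_pmf ({1..k} \<times> {..<r} \<times> {..<n}) False (\<lambda>_. bernoulli_pmf (1/2)))
           {\<omega>. \<forall>i<r. card {j\<in>T. \<omega> (kt0, i, j)} \<noteq> h}
         = (1 - pmf (binomial_pmf (card T) (1/2)) h) ^ r"
proof (induction r)
  case 0
  then show ?case by simp
next
  case (Suc r)
  define I where "I = {1..k} \<times> {..<r} \<times> {..<n}"
  define W where "W = {1..k} \<times> {r} \<times> {..<n}"
  define B where "B = (\<lambda>_::nat\<times>nat\<times>nat. bernoulli_pmf (1/2))"
  define q where "q = pmf (binomial_pmf (card T) (1/2)) h"
  define F where "F = {\<omega>::nat\<times>nat\<times>nat\<Rightarrow>bool. \<forall>i<r. card {j\<in>T. \<omega> (kt0, i, j)} \<noteq> h}"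
  define G where "G = {g::nat\<times>nat\<times>nat\<Rightarrow>bool. card {j\<in>T. g (kt0, r, j)} \<noteq> h}"
  have fI: "finite I" "finite W" "I \<inter> W = {}" unfolding I_def W_def by auto
  have IW: "{1..k} \<times> {..<Suc r} \<times> {..<n} = I \<union> W" unfolding I_def W_def by auto
  have pre: "(\<lambda>(f,g) x. if x \<in> I then f x else g x) -` {\<omega>. \<forall>i<Suc r. card {j\<in>T. \<omega> (kt0, i, j)} \<noteq> h}
          = F \<times> G"
  proof -
    have in1: "(kt0, i, j) \<in> I" if "i < r" "j \<in> T" for i j
      using that kt0 T unfolding I_def by auto
    have in2: "(kt0, r, j) \<notin> I" for j unfolding I_def by auto
    have c1: "{j\<in>T. (if (kt0, i, j) \<in> I then f (kt0, i, j) else g (kt0, i, j))} = {j\<in>T. f (kt0, i, j)}"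
      if "i < r" for i f g using in1[OF that] by auto
    have c2: "{j\<in>T. (if (kt0, r, j) \<in> I then f (kt0, r, j) else g (kt0, r, j))} = {j\<in>T. g (kt0, r, j)}"
      for f g using in2 by auto
    show ?thesis
    proof (intro set_eqI iffI)
      fix x assume xin: "x \<in> (\<lambda>(f,g) x. if x \<in> I then f x else g x) -` {\<omega>. \<forall>i<Suc r. card {j\<in>T. \<omega> (kt0, i, j)} \<noteq> h}"
      obtain f g where x: "x = (f, g)" by (cases x)
      have h: "\<forall>i<Suc r. card {j\<in>T. (if (kt0, i, j) \<in> I then f (kt0, i, j) else g (kt0, i, j))} \<noteq> h"
        using xin unfolding x by (simp only: vimage_eq mem_Collect_eq case_prod_conv)
      have "f \<in> F" unfolding F_def mem_Collect_eq
      proof (intro allI impI)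
        fix i assume ir: "i < r"
        have A: "card {j\<in>T. (if (kt0, i, j) \<in> I then f (kt0, i, j) else g (kt0, i, j))} \<noteq> h"
          using h[rule_format, OF less_SucI[OF ir]] .
        show "card {j\<in>T. f (kt0, i, j)} \<noteq> h" using A unfolding c1[OF ir] .
      qed
      moreover have "g \<in> G" unfolding G_def mem_Collect_eq
      proof -
        have A: "card {j\<in>T. (if (kt0, r, j) \<in> I then f (kt0, r, j) else g (kt0, r, j))} \<noteq> h"
          using h[rule_format, OF lessI] .
        show "card {j\<in>T. g (kt0, r, j)} \<noteq> h" using A unfolding c2 .
      qed
      ultimately show "x \<in> F \<times> G" using x by simp
    next
      fix x assume "x \<in> F \<times> G"
      then obtain f g where x: "x = (f, g)" and f: "f \<in> F" and g: "g \<in> G" by auto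
      have "\<forall>i<Suc r. card {j\<in>T. (if (kt0, i, j) \<in> I then f (kt0, i, j) else g (kt0, i, j))} \<noteq> h"
      proof (intro allI impI)
        fix i assume "i < Suc r"
        then consider "i < r" | "i = r" by linarith
        then show "card {j\<in>T. (if (kt0, i, j) \<in> I then f (kt0, i, j) else g (kt0, i, j))} \<noteq> h"
        proof cases
          case 1 then show ?thesis using c1[OF 1] f unfolding F_def by simp
        next
          case 2 show ?thesis unfolding 2 c2 using g unfolding G_def by simp
        qed
      qed
      then show "x \<in> (\<lambda>(f,g) x. if x \<in> I then f x else g x) -` {\<omega>. \<forall>i<Suc r. card {j\<in>T. \<omega> (kt0, i, j)} \<noteq> h}"
        unfolding x by (simp only: vimage_eq mem_Collect_eq case_prod_conv)
    qed
  qed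
  have "measure_pmf.prob (Pi_pmf ({1..k} \<times> {..<Suc r} \<times> {..<n}) False B)
           {\<omega>. \<forall>i<Suc r. card {j\<in>T. \<omega> (kt0, i, j)} \<noteq> h}
       = measure_pmf.prob (pair_pmf (Pi_pmf I False B) (Pi_pmf W False B)) (F \<times> G)"
    unfolding IW Pi_pmf_union[OF fI] measure_map_pmf pre by (rule refl)
  also have "\<dots> = measure_pmf.prob (Pi_pmf I False B) F * measure_pmf.prob (Pi_pmf W False B) G"
    using fI by (intro prob_pair_times finite_set_Pi_pmf_bool)
  also have "measure_pmf.prob (Pi_pmf I False B) F = (1 - q) ^ r"
    using Suc.IH unfolding I_def B_def F_def q_def .
  also have "measure_pmf.prob (Pi_pmf W False B) G = 1 - q"
  proof -
    define Ar where "Ar = (\<lambda>j. (kt0, r, j)) ` T"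
    have ArW: "Ar \<subseteq> W" unfolding Ar_def W_def using kt0 T by auto
    have cA: "card Ar = card T" unfolding Ar_def by (intro card_image) (auto simp: inj_on_def)
    have "card {x\<in>Ar. g x} = card {j\<in>T. g (kt0, r, j)}" for g
    proof -
      have "{x\<in>Ar. g x} = (\<lambda>j. (kt0, r, j)) ` {j\<in>T. g (kt0, r, j)}" unfolding Ar_def by auto
      then show ?thesis by (simp add: card_image inj_on_def)
    qed
    then have "G = {g. card {x\<in>Ar. g x} \<noteq> h}" unfolding G_def by simp
    then show ?thesis using block_prob[OF fI(2) ArW, of h] cA unfolding B_def q_def by simp
  qed
  finally show ?case unfolding B_def q_def by simp
qed


lemma cost_total:
  assumes n: "n \<ge> 2" and k: "k \<ge> 1" and r: "r = nat \<lceil>2 * sqrt (real k)\<rceil>"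
  shows "(\<Sum>kt\<in>{1..k}. \<Sum>i<r. run_cost n kt (\<lambda>j. \<omega> (kt, i, j)))
           \<le> 144 * real k powr (3/2) * real n ^ ((k + 1) div 2) * ln (real n)"
proof -
  define L where "L = ln (real n)"
  have L0: "L \<ge> 0" unfolding L_def using n by simp
  have each: "run_cost n kt (\<lambda>j. \<omega> (kt, i, j)) \<le> 12 * real k * L * real n ^ ((kt + 1) div 2)"
    if "kt \<in> {1..k}" for kt i
  proof -
    have "run_cost n kt (\<lambda>j. \<omega> (kt, i, j)) \<le> 12 * real kt * real n ^ ((kt + 1) div 2) * L"
      using cost1[OF n, of kt] that unfolding L_def by simp
    also have "\<dots> \<le> 12 * real k * real n ^ ((kt + 1) div 2) * L"
      using that L0 by (intro mult_right_mono) auto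
    finally show ?thesis by (simp add: algebra_simps)
  qed
  have "(\<Sum>kt\<in>{1..k}. \<Sum>i<r. run_cost n kt (\<lambda>j. \<omega> (kt, i, j)))
        \<le> (\<Sum>kt\<in>{1..k}. \<Sum>i<r. 12 * real k * L * real n ^ ((kt + 1) div 2))"
    using each by (intro sum_mono) auto
  also have "\<dots> = real r * (12 * real k * L) * (\<Sum>kt\<in>{1..k}. real n ^ ((kt + 1) div 2))"
    by (simp add: sum_distrib_left algebra_simps)
  also have "\<dots> \<le> real r * (12 * real k * L) * (4 * real n ^ ((k + 1) div 2))"
    using geom_sum[of "real n" k] n L0 by (intro mult_left_mono) auto
  also have "\<dots> \<le> (3 * sqrt (real k)) * (12 * real k * L) * (4 * real n ^ ((k + 1) div 2))"
  proof -
    have s1: "sqrt (real k) \<ge> 1" using k by simp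
    have "real r \<le> 2 * sqrt (real k) + 1"
      unfolding r using s1 by linarith
    also have "\<dots> \<le> 3 * sqrt (real k)" using s1 by simp
    finally have "real r \<le> 3 * sqrt (real k)" .
    then show ?thesis using L0 by (intro mult_right_mono) auto
  qed
  also have "\<dots> = 144 * (real k * sqrt (real k)) * real n ^ ((k + 1) div 2) * L"
    by (simp add: algebra_simps)
  also have "real k * sqrt (real k) = real k powr (3/2)"
  proof -
    have "real k powr (3/2) = real k powr (1 + 1/2)" by simp
    also have "\<dots> = real k powr 1 * real k powr (1/2)" by (rule powr_add)
    also have "\<dots> = real k * sqrt (real k)" using k by (simp add: powr_half_sqrt)
    finally show ?thesis by simp
  qed
  finally show ?thesis unfolding L_def .
qed

lemma found_pair_good:
  assumes M1: "M1 \<subseteq> {..<n}" and kt: "kt \<in> {1..k}" and fp: "found_pair n p M1 kt a S1 S2"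
  shows "kswap_neighbor n k M1 (swap_jobs (S1 \<union> S2) M1) \<and>
         makespan n p (swap_jobs (S1 \<union> S2) M1) < makespan n p M1"
proof -
  have S1: "S1 \<subseteq> {j. j < n \<and> a j}" "card S1 = (kt + 1) div 2"
   and S2: "S2 \<subseteq> {j. j < n \<and> \<not> a j}" "card S2 = kt div 2"
   and v: "- sval n p M1 S1 < sval n p M1 S2" "sval n p M1 S2 < Delta n p M1 - sval n p M1 S1"
    using fp unfolding found_pair_def by auto
  define T where "T = S1 \<union> S2"
  have fin: "finite S1" "finite S2" using S1(1) S2(1) by (auto intro: finite_subset)
  have dis: "S1 \<inter> S2 = {}" using S1(1) S2(1) by auto
  have T: "T \<subseteq> {..<n}" unfolding T_def using S1(1) S2(1) by auto
  have sv: "sval n p M1 T = sval n p M1 S1 + sval n p M1 S2"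
    unfolding T_def by (rule sval_union[OF dis fin])
  have imp: "makespan n p (swap_jobs T M1) < makespan n p M1"
    using improve_iff[OF M1 T, of p] sv v by simp
  have cT: "card T = kt" unfolding T_def using card_Un_disjoint[OF fin dis] S1(2) S2(2) by simp
  have finT: "finite T" using T finite_subset by auto
  have TU: "T \<inter> M1 \<union> (T - M1) = T" by auto
  have "card (T \<inter> M1 \<union> (T - M1)) = card (T \<inter> M1) + card (T - M1)"
    by (rule card_Un_disjoint) (use finT in auto)
  then have cc: "card (T \<inter> M1) + card (T - M1) \<le> k" using TU cT kt by simp
  have "T \<inter> M1 \<subseteq> M1 \<and> T - M1 \<subseteq> {..<n} - M1 \<and> card (T \<inter> M1) + card (T - M1) \<le> k
        \<and> swap_jobs T M1 = swap_jobs (T \<inter> M1 \<union> (T - M1)) M1"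
    using T cc TU by auto
  then have "kswap_neighbor n k M1 (swap_jobs T M1)"
    unfolding kswap_neighbor_def by blast
  then show ?thesis unfolding T_def[symmetric] using imp by (rule conjI)
qed

lemma prob_part:
  assumes k: "k \<ge> 1" and M1: "M1 \<subseteq> {..<n}" and r: "r = nat \<lceil>2 * sqrt (real k)\<rceil>"
    and ex: "\<exists>M1'. kswap_neighbor n k M1 M1' \<and> makespan n p M1' < makespan n p M1"
  shows "measure_pmf.prob (proc_pmf n k r)
              {\<omega>. \<exists>kt\<in>{1..k}. \<exists>i<r. kswap_returns_true n p M1 kt (\<lambda>j. \<omega> (kt, i, j))}
              \<ge> 1 - 1 / exp 1"
proof -
  obtain M1' T'' T' where nb: "T' \<subseteq> M1" "T'' \<subseteq> {..<n} - M1" "card T' + card T'' \<le> k"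
      "M1' = swap_jobs (T' \<union> T'') M1" and imp: "makespan n p M1' < makespan n p M1"
    using ex unfolding kswap_neighbor_def by blast
  define T where "T = T' \<union> T''"
  have T: "T \<subseteq> {..<n}" unfolding T_def using nb M1 by auto
  have finT: "finite T" using T finite_subset by auto
  have cTk: "card T \<le> k" unfolding T_def using card_Un_le[of T' T''] nb(3) by simp
  have sv: "0 < sval n p M1 T" "sval n p M1 T < Delta n p M1"
    using improve_iff[OF M1 T, of p] imp nb(4) unfolding T_def by auto
  have Tne: "T \<noteq> {}" using sv(1) unfolding sval_def by auto
  define m where "m = card T"
  have m1: "m \<ge> 1" unfolding m_def using Tne finT by (simp add: Suc_le_eq card_gt_0_iff)
  have mk: "m \<in> {1..k}" using m1 cTk unfolding m_def by simp
  define h where "h = (m + 1) div 2"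
  define F where "F = {\<omega>::nat\<times>nat\<times>nat\<Rightarrow>bool. \<forall>i<r. card {j\<in>T. \<omega> (m, i, j)} \<noteq> h}"
  define q where "q = pmf (binomial_pmf m (1/2)) h"
  have sub: "- F \<subseteq> {\<omega>. \<exists>kt\<in>{1..k}. \<exists>i<r. kswap_returns_true n p M1 kt (\<lambda>j. \<omega> (kt, i, j))}"
  proof
    fix \<omega> assume "\<omega> \<in> - F"
    then obtain i where i: "i < r" "card {j\<in>T. \<omega> (m, i, j)} = h" unfolding F_def by auto
    define a where "a = (\<lambda>j. \<omega> (m, i, j))"
    define S1 where "S1 = {j\<in>T. a j}"
    define S2 where "S2 = {j\<in>T. \<not> a j}"
    have f12: "finite S1" "finite S2" "S1 \<inter> S2 = {}" "S1 \<union> S2 = T"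
      unfolding S1_def S2_def using finT by auto
    have c1: "card S1 = (m + 1) div 2" using i(2) unfolding S1_def a_def h_def by simp
    have "card S1 + card S2 = m" unfolding m_def using card_Un_disjoint[OF f12(1-3)] f12(4) by simp
    then have c2: "card S2 = m div 2" using c1 by simp
    have svu: "sval n p M1 T = sval n p M1 S1 + sval n p M1 S2"
      using sval_union[OF f12(3) f12(1,2)] f12(4) by simp
    have s1: "S1 \<subseteq> {j. j < n \<and> a j}" using T unfolding S1_def by auto
    have s2: "S2 \<subseteq> {j. j < n \<and> \<not> a j}" using T unfolding S2_def by auto
    have v1: "- sval n p M1 S1 < sval n p M1 S2" using sv(1) svu by linarith
    have v2: "sval n p M1 S2 < Delta n p M1 - sval n p M1 S1" using sv(2) svu by linarith
    have "found_pair n p M1 m a S1 S2"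
      unfolding found_pair_def by (rule conjI[OF s1 conjI[OF c1 conjI[OF s2 conjI[OF c2 conjI[OF v1 v2]]]]])
    then have "kswap_returns_true n p M1 m (\<lambda>j. \<omega> (m, i, j))"
      unfolding kswap_returns_true_def a_def by blast
    then show "\<omega> \<in> {\<omega>. \<exists>kt\<in>{1..k}. \<exists>i<r. kswap_returns_true n p M1 kt (\<lambda>j. \<omega> (kt, i, j))}"
      using mk i(1) by blast
  qed
  have PF: "measure_pmf.prob (proc_pmf n k r) F = (1 - q) ^ r"
    unfolding proc_pmf_def F_def q_def m_def using fail_prob[OF mk[unfolded m_def] T, of r h] by simp
  have qeq: "q = real (m choose h) / 2 ^ m"
  proof -
    have hm: "h \<le> m" unfolding h_def by simp
    have "q = real (m choose h) * (1/2)^h * (1/2)^(m-h)"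
      unfolding q_def using pmf_binomial[of "1/2" m h] by simp
    then have "q = real (m choose h) * ((1/2)^h * (1/2)^(m-h))" by (simp only: mult.assoc)
    also have "(1/2::real)^h * (1/2)^(m-h) = (1/2)^(h + (m-h))"
      by (rule power_add[symmetric])
    also have "h + (m - h) = m" using hm by simp
    finally show ?thesis by (simp add: power_one_over)
  qed
  have qlow: "q \<ge> 1 / (2 * sqrt m)" using q_lower[OF m1] qeq unfolding h_def by simp
  have q1: "q \<le> 1" unfolding q_def by (rule pmf_le_1)
  have qr: "q * real r \<ge> 1"
  proof -
    have "real r \<ge> 2 * sqrt (real k)" unfolding r by linarith
    moreover have "sqrt (real k) \<ge> sqrt (real m)" using mk by simp
    ultimately have rm: "real r \<ge> 2 * sqrt (real m)" by linarith
    have sp: "sqrt (real m) > 0" using m1 by simp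
    have "1 = (1 / (2 * sqrt m)) * (2 * sqrt m)" using sp by simp
    also have "\<dots> \<le> q * real r" using qlow rm sp pmf_nonneg[of "binomial_pmf m (1/2)" h] unfolding q_def by (intro mult_mono) auto
    finally show ?thesis .
  qed
  have "(1 - q) ^ r \<le> exp (- q) ^ r"
    using q1 exp_ge_add_one_self[of "-q"] by (intro power_mono) auto
  also have "\<dots> = exp (- (q * real r))"
    using exp_of_nat_mult[of r "-q"] by (simp add: mult.commute)
  also have "\<dots> \<le> exp (-1)" using qr by simp
  also have "\<dots> = 1 / exp 1" by (simp add: exp_minus')
  finally have Fb: "(1 - q) ^ r \<le> 1 / exp 1" .
  have "measure_pmf.prob (proc_pmf n k r) (- F) = 1 - measure_pmf.prob (proc_pmf n k r) F"
    using measure_pmf.prob_compl[of F "proc_pmf n k r"] by (simp add: Compl_eq_Diff_UNIV)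
  also have "\<dots> \<ge> 1 - 1 / exp 1" using PF Fb by simp
  finally have "measure_pmf.prob (proc_pmf n k r) (- F) \<ge> 1 - 1 / exp 1" .
  moreover have "measure_pmf.prob (proc_pmf n k r) (- F) \<le>
      measure_pmf.prob (proc_pmf n k r) {\<omega>. \<exists>kt\<in>{1..k}. \<exists>i<r. kswap_returns_true n p M1 kt (\<lambda>j. \<omega> (kt, i, j))}"
    using sub by (intro measure_pmf.finite_measure_mono) auto
  ultimately show ?thesis by linarith
qed

theorem theorem1:
  "\<exists>C0 C1 :: real. C0 > 0 \<and> C1 > 0 \<and>
    (\<forall>(n::nat) (k::nat) (p::nat \<Rightarrow> real) (M1::nat set).
       k \<ge> 1 \<longrightarrow> (\<forall>j<n. p j > 0) \<longrightarrow> M1 \<subseteq> {..<n} \<longrightarrow>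
       (let r = nat \<lceil>C0 * sqrt (real k)\<rceil> in
         (n \<ge> 2 \<longrightarrow>
            (\<forall>\<omega> :: nat \<times> nat \<times> nat \<Rightarrow> bool.
               (\<Sum>kt\<in>{1..k}. \<Sum>i<r. run_cost n kt (\<lambda>j. \<omega> (kt, i, j)))
                 \<le> C1 * real k powr (3/2) * real n ^ ((k + 1) div 2) * ln (real n)))
         \<and>
         ((\<exists>M1'. kswap_neighbor n k M1 M1' \<and> makespan n p M1' < makespan n p M1) \<longrightarrow>
            measure_pmf.prob (proc_pmf n k r)
              {\<omega>. \<exists>kt\<in>{1..k}. \<exists>i<r. kswap_returns_true n p M1 kt (\<lambda>j. \<omega> (kt, i, j))}
              \<ge> 1 - 1 / exp 1)
         \<and>
         (\<forall>kt\<in>{1..k}. \<forall>a S1 S2. found_pair n p M1 kt a S1 S2 \<longrightarrow>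
            kswap_neighbor n k M1 (swap_jobs (S1 \<union> S2) M1) \<and>
            makespan n p (swap_jobs (S1 \<union> S2) M1) < makespan n p M1)))"
  proof (rule exI[of _ 2], rule exI[of _ 144], intro conjI allI impI)
  fix n k :: nat and p :: "nat \<Rightarrow> real" and M1 :: "nat set"
  assume k: "k \<ge> 1" and pos: "\<forall>j<n. p j > 0" and M1: "M1 \<subseteq> {..<n}"
  define r where "r = nat \<lceil>2 * sqrt (real k)\<rceil>"
  show "let r = nat \<lceil>2 * sqrt (real k)\<rceil> in
         (n \<ge> 2 \<longrightarrow>
            (\<forall>\<omega> :: nat \<times> nat \<times> nat \<Rightarrow> bool.
               (\<Sum>kt\<in>{1..k}. \<Sum>i<r. run_cost n kt (\<lambda>j. \<omega> (kt, i, j)))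
                 \<le> 144 * real k powr (3/2) * real n ^ ((k + 1) div 2) * ln (real n)))
         \<and>
         ((\<exists>M1'. kswap_neighbor n k M1 M1' \<and> makespan n p M1' < makespan n p M1) \<longrightarrow>
            measure_pmf.prob (proc_pmf n k r)
              {\<omega>. \<exists>kt\<in>{1..k}. \<exists>i<r. kswap_returns_true n p M1 kt (\<lambda>j. \<omega> (kt, i, j))}
              \<ge> 1 - 1 / exp 1)
         \<and>
         (\<forall>kt\<in>{1..k}. \<forall>a S1 S2. found_pair n p M1 kt a S1 S2 \<longrightarrow>
            kswap_neighbor n k M1 (swap_jobs (S1 \<union> S2) M1) \<and>
            makespan n p (swap_jobs (S1 \<union> S2) M1) < makespan n p M1)"
    unfolding Let_def r_def[symmetric]
    apply (rule conjI)
     apply (intro impI allI)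
     apply (rule cost_total[OF _ k r_def])
     apply assumption
    apply (rule conjI)
     apply (rule impI)
     apply (rule prob_part[OF k M1 r_def])
     apply assumption
    apply (intro ballI allI impI)
    apply (rule found_pair_good[OF M1])
     apply assumption+
    done
qed (auto)

end
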